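(* Let $n\ge3$, $\boldsymbol\ell=(\ell_1,\ldots,\ell_n)$ positive lengths, $\mu\in\mathbb{R}$, and $\tau$, $N>0$ smooth functions on $T^n$ of $s^1$ only; let $\tau^*=\int_{S^1}N\tau\,ds/\int_{S^1}N\,ds$. Suppose either (a) $\mu,\tau^*$ are nonzero with the same sign and $r=(\mu/\tau^* )^{1/n}$, or (b) $\mu=\tau^*=0$ and $r>0$ is arbitrary; and let $(\bar g,\bar K)=(g_{r\boldsymbol\ell},\ \tau\,(r\ell_1)^2(ds^1)^2)$ be the corresponding solution of the constraint equations generated by the conformal data set $(g_{\boldsymbol\ell},\mu\sigma^\flat_{\boldsymbol\ell},\tau,N)$. Let $\tau^\circ=\int_{S^1}\tau\,ds$ and $\hat{\boldsymbol\ell}=(r\ell_2,\ldots,r\ell_n)$. If $\tau^\circ\ne0$, then $\bar g$ and $\bar K$ are the induced metric and second fundamental form of a simple product embedding of $T^n$ into the flat Kasner spacetime $\mathcal K_\Psi\times T^{n-1}_{\hat{\boldsymbol\ell}}$ with $\Psi=(r\ell_1)\tau^\circ$. If $\tau^\circ=0$, then $\bar g$ and $\bar K$ are the induced metric and second fundamental form of a simple product embedding into a static toroidal spacetime $\mathcal C_L\times T^{n-1}_{\hat{\boldsymbol\ell}}$ for some $L>0$.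
   Context: $q=\frac{2n}{n-2}$, $\kappa=\frac{n-1}{n}$. $S^1=\mathbb{R}/\mathbb{Z}$ with unit coordinate $s$ ($\int_{S^1}ds=1$); $T^n$ has unit coordinates $(s^1,\ldots,s^n)$; $g_{\boldsymbol\ell}=\sum_k\ell_k^2(ds^k)^2$; $T^{m}_{\hat{\boldsymbol\ell}}$ is $T^m$ with $g_{\hat{\boldsymbol\ell}}$; $\sigma^\flat_{\boldsymbol\ell}=\kappa\ell_1^2(ds^1)^2-\frac1n\sum_{k\ge2}\ell_k^2(ds^k)^2$. $\mathbb{R}^{1,1}$ is $\mathbb{R}^2$ with coordinates $(t,x)$ and metric $-dt^2+dx^2$, time-oriented by $\partial_t$; $I_\pm=\{\pm t>|x|\}$. For $\Psi\ne0$, $B_\Psi$ is the linear boost with matrix $\begin{pmatrix}\cosh\Psi&\sinh\Psi\\ \sinh\Psi&\cosh\Psi\end{pmatrix}$; the Kasner surface $\mathcal K_\Psi$ is $I_+/\langle B_\Psi\rangle$ if $\Psi>0$ and $I_-/\langle B_\Psi\rangle$ if $\Psi<0$, with the inherited time-oriented flat Lorentzian metric. For $L>0$, $\mathcal C_L=\mathbb{R}^{1,1}/\langle(t,x)\mapsto(t,x+L)\rangle$. Products carry the product Lorentzian metric; $\mathcal K_\Psi\times T^{n-1}_{\hat{\boldsymbol\ell}}$ is isometric to a flat Kasner spacetime and $\mathcal C_L\times T^{n-1}_{\hat{\boldsymbol\ell}}$ is a static toroidal spacetime. A simple product embedding $\iota:T^n\to\Lambda\times T^{n-1}_{\hat{\boldsymbol\ell}}$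 ($\Lambda$ a Lorentzian surface) has the form $\iota(s^1,\ldots,s^n)=(\gamma(s^1),(s^2,\ldots,s^n))$ for a curve $\gamma:S^1\to\Lambda$. Induced second fundamental form: $K(X,Y)=-\langle n,\nabla_XY\rangle$ with $n$ the future unit normal. *)

theory Defs
  imports "HOL-Analysis.Analysis"
begin

definition smooth_fun :: "(real \<Rightarrow> real) \<Rightarrow> bool" where
  "smooth_fun f \<longleftrightarrow> (\<forall>k x. ((deriv ^^ k) f) differentiable (at x))"

definition smooth_curve :: "(real \<Rightarrow> real \<times> real) \<Rightarrow> bool" where
  "smooth_curve \<Gamma> \<longleftrightarrow> smooth_fun (\<lambda>s. fst (\<Gamma> s)) \<and> smooth_fun (\<lambda>s. snd (\<Gamma> s))"

text \<open>Functions on S^1 = R/Z, viewed as 1-periodic functions on R.\<close>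
definition periodic1 :: "(real \<Rightarrow> real) \<Rightarrow> bool" where
  "periodic1 f \<longleftrightarrow> (\<forall>s. f (s + 1) = f s)"

definition mink :: "real \<times> real \<Rightarrow> real \<times> real \<Rightarrow> real" where
  "mink a b = - fst a * fst b + snd a * snd b"

definition boost :: "real \<Rightarrow> real \<times> real \<Rightarrow> real \<times> real" where
  "boost \<Psi> p = (cosh \<Psi> * fst p + sinh \<Psi> * snd p, sinh \<Psi> * fst p + cosh \<Psi> * snd p)"

definition I_plus :: "(real \<times> real) set" where
  "I_plus = {p. fst p > \<bar>snd p\<bar>}"

definition I_minus :: "(real \<times> real) set" where
  "I_minus = {p. - fst p > \<bar>snd p\<bar>}"

text \<open>A smooth map gamma : S^1 -> K_Psi is represented by a smooth lift
  Gamma : R -> I_+ (Psi > 0) or I_- (Psi < 0) whose projection to the quotient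
  I_(+/-) / <B_Psi> is 1-periodic (every smooth map from S^1 lifts, R being simply
  connected).  The group <B_Psi> consists of the boosts B_Psi^j = boost (j Psi).
  gamma is an embedding iff it is an immersion and injective on S^1.\<close>
definition kasner_embedded_curve :: "real \<Rightarrow> (real \<Rightarrow> real \<times> real) \<Rightarrow> bool" where
  "kasner_embedded_curve \<Psi> \<Gamma> \<longleftrightarrow>
     smooth_curve \<Gamma> \<and>
     (\<forall>s. \<Gamma> s \<in> (if \<Psi> > 0 then I_plus else I_minus)) \<and>
     (\<forall>s. \<exists>j::int. \<Gamma> (s + 1) = boost (of_int j * \<Psi>) (\<Gamma> s)) \<and>
     (\<forall>s. vector_derivative \<Gamma> (at s) \<noteq> 0) \<and>
     (\<forall>s s'. 0 \<le> s \<and> s < 1 \<and> 0 \<le> s' \<and> s' < 1 \<and> s \<noteq> s' \<longrightarrow>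
        \<not> (\<exists>j::int. \<Gamma> s = boost (of_int j * \<Psi>) (\<Gamma> s')))"

text \<open>Same for C_L = R^{1,1} / <(t,x) -> (t, x + L)>.\<close>
definition static_embedded_curve :: "real \<Rightarrow> (real \<Rightarrow> real \<times> real) \<Rightarrow> bool" where
  "static_embedded_curve L \<Gamma> \<longleftrightarrow>
     smooth_curve \<Gamma> \<and>
     (\<forall>s. \<exists>j::int. \<Gamma> (s + 1) = \<Gamma> s + (0, of_int j * L)) \<and>
     (\<forall>s. vector_derivative \<Gamma> (at s) \<noteq> 0) \<and>
     (\<forall>s s'. 0 \<le> s \<and> s < 1 \<and> 0 \<le> s' \<and> s' < 1 \<and> s \<noteq> s' \<longrightarrow>
        \<not> (\<exists>j::int. \<Gamma> s = \<Gamma> s' + (0, of_int j * L)))"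

text \<open>Tangent vectors to the (locally) product spacetime, in the coordinates (t,x) on the
  universal cover of Lambda and the unit coordinates (s^2,...,s^n) on T^{n-1}: a pair
  (a, u) with a in R^{1,1} and u k the ds^k-component (k = 2..n).
  The product metric is  -dt^2 + dx^2 + sum_{k=2..n} lhat_k^2 (ds^k)^2 ;
  its coefficients are constant, so the Levi-Civita connection is the flat one.\<close>
definition prod_metric :: "nat \<Rightarrow> (nat \<Rightarrow> real) \<Rightarrow>
    (real \<times> real) \<times> (nat \<Rightarrow> real) \<Rightarrow> (real \<times> real) \<times> (nat \<Rightarrow> real) \<Rightarrow> real" where
  "prod_metric n lhat v w =
     mink (fst v) (fst w) + (\<Sum>k\<in>{2..n}. (lhat k)\<^sup>2 * snd v k * snd w k)"

text \<open>The simple product embedding iota(s^1,...,s^n) = (gamma(s^1), (s^2,...,s^n)):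
  its differential applied to the coordinate field d/ds^i at a point s of T^n
  (s given by a lift, s i = s^i).\<close>
definition spe_tangent :: "(real \<Rightarrow> real \<times> real) \<Rightarrow> (nat \<Rightarrow> real) \<Rightarrow> nat \<Rightarrow>
    (real \<times> real) \<times> (nat \<Rightarrow> real)" where
  "spe_tangent \<Gamma> s i =
     (if i = 1 then (vector_derivative \<Gamma> (at (s 1)), (\<lambda>_. 0))
      else ((0, 0), (\<lambda>k. if k = i then 1 else 0)))"

text \<open>The covariant derivative nabla_{d/ds^i} (d iota (d/ds^j)) in the flat product spacetime.\<close>
definition spe_hessian :: "(real \<Rightarrow> real \<times> real) \<Rightarrow> (nat \<Rightarrow> real) \<Rightarrow> nat \<Rightarrow> nat \<Rightarrow>
    (real \<times> real) \<times> (nat \<Rightarrow> real)" where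
  "spe_hessian \<Gamma> s i j =
     (if i = 1 \<and> j = 1
      then (vector_derivative (\<lambda>t. vector_derivative \<Gamma> (at t)) (at (s 1)), (\<lambda>_. 0))
      else ((0, 0), (\<lambda>_. 0)))"

definition spe_induced_metric :: "nat \<Rightarrow> (nat \<Rightarrow> real) \<Rightarrow> (real \<Rightarrow> real \<times> real) \<Rightarrow>
    (nat \<Rightarrow> real) \<Rightarrow> nat \<Rightarrow> nat \<Rightarrow> real" where
  "spe_induced_metric n lhat \<Gamma> s i j =
     prod_metric n lhat (spe_tangent \<Gamma> s i) (spe_tangent \<Gamma> s j)"

text \<open>Future unit normal (time orientation by d/dt: a future timelike vector has t-component > 0).\<close>
definition spe_future_unit_normal :: "nat \<Rightarrow> (nat \<Rightarrow> real) \<Rightarrow> (real \<Rightarrow> real \<times> real) \<Rightarrow>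
    (nat \<Rightarrow> real) \<Rightarrow> (real \<times> real) \<times> (nat \<Rightarrow> real) \<Rightarrow> bool" where
  "spe_future_unit_normal n lhat \<Gamma> s \<nu> \<longleftrightarrow>
     prod_metric n lhat \<nu> \<nu> = -1 \<and>
     (\<forall>i\<in>{1..n}. prod_metric n lhat \<nu> (spe_tangent \<Gamma> s i) = 0) \<and>
     fst (fst \<nu>) > 0"

text \<open>(g, K) (given in coordinates on T^n, as functions of a lift s and indices 1..n) is the
  induced metric and second fundamental form K(X,Y) = -<n, nabla_X Y> of the simple
  product embedding determined by Gamma.\<close>
definition spe_induces :: "nat \<Rightarrow> (nat \<Rightarrow> real) \<Rightarrow> (real \<Rightarrow> real \<times> real) \<Rightarrow>
    ((nat \<Rightarrow> real) \<Rightarrow> nat \<Rightarrow> nat \<Rightarrow> real) \<Rightarrow> ((nat \<Rightarrow> real) \<Rightarrow> nat \<Rightarrow> nat \<Rightarrow> real) \<Rightarrow> bool" where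
  "spe_induces n lhat \<Gamma> g K \<longleftrightarrow>
     (\<forall>s. (\<forall>i\<in>{1..n}. \<forall>j\<in>{1..n}. spe_induced_metric n lhat \<Gamma> s i j = g s i j) \<and>
          (\<exists>\<nu>. spe_future_unit_normal n lhat \<Gamma> s \<nu> \<and>
               (\<forall>i\<in>{1..n}. \<forall>j\<in>{1..n}. - prod_metric n lhat \<nu> (spe_hessian \<Gamma> s i j) = K s i j)))"

definition flat_torus_metric :: "(nat \<Rightarrow> real) \<Rightarrow> (nat \<Rightarrow> real) \<Rightarrow> nat \<Rightarrow> nat \<Rightarrow> real" where
  "flat_torus_metric l s i j = (if i = j then (l i)\<^sup>2 else 0)"

definition ds1_sq_tensor :: "(real \<Rightarrow> real) \<Rightarrow> real \<Rightarrow> (nat \<Rightarrow> real) \<Rightarrow> nat \<Rightarrow> nat \<Rightarrow> real" where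
  "ds1_sq_tensor \<tau> c s i j = (if i = 1 \<and> j = 1 then \<tau> (s 1) * c else 0)"

end

theory Submission
  imports Defs
begin


inductive sm :: "(real \<Rightarrow> real) \<Rightarrow> bool" where
  sm_smooth: "smooth_fun f \<Longrightarrow> sm f"
| sm_const: "sm (\<lambda>x. c)"
| sm_add: "sm f \<Longrightarrow> sm g \<Longrightarrow> sm (\<lambda>x. f x + g x)"
| sm_mult: "sm f \<Longrightarrow> sm g \<Longrightarrow> sm (\<lambda>x. f x * g x)"
| sm_neg: "sm f \<Longrightarrow> sm (\<lambda>x. - f x)"
| sm_exp: "sm f \<Longrightarrow> sm (\<lambda>x. exp (f x))"
| sm_anti: "sm g \<Longrightarrow> (\<forall>x. (f has_real_derivative g x) (at x)) \<Longrightarrow> sm f"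

lemma smooth_fun_deriv: "smooth_fun f \<Longrightarrow> smooth_fun (deriv f)"
  unfolding smooth_fun_def
  by (metis comp_apply funpow_Suc_right)

lemma sm_deriv: "sm f \<Longrightarrow> \<exists>g. sm g \<and> (\<forall>x. (f has_real_derivative g x) (at x))"
proof (induction rule: sm.induct)
  case (sm_smooth f)
  have "\<forall>x. f differentiable (at x)" using sm_smooth unfolding smooth_fun_def
    by (metis funpow_0)
  then show ?case using smooth_fun_deriv[OF sm_smooth] sm.sm_smooth
    by (meson DERIV_deriv_iff_real_differentiable)
next
  case (sm_const c)
  then show ?case using sm.sm_const[of 0] by auto
next
  case (sm_add f g)
  then obtain f' g' where "sm f'" "sm g'" "\<forall>x. (f has_real_derivative f' x) (at x)"
     "\<forall>x. (g has_real_derivative g' x) (at x)" by blast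
  then show ?case by (intro exI[of _ "\<lambda>x. f' x + g' x"]) (auto intro: sm.sm_add DERIV_add)
next
  case (sm_mult f g)
  then obtain f' g' where "sm f'" "sm g'" "\<forall>x. (f has_real_derivative f' x) (at x)"
     "\<forall>x. (g has_real_derivative g' x) (at x)" by blast
  then show ?case using sm_mult.hyps
    apply (intro exI[of _ "\<lambda>x. f' x * g x + g' x * f x"])
    by (auto intro: sm.sm_add sm.sm_mult DERIV_mult)
next
  case (sm_neg f)
  then obtain f' where "sm f'" "\<forall>x. (f has_real_derivative f' x) (at x)" by blast
  then show ?case
    by (intro exI[of _ "\<lambda>x. - f' x"]) (auto intro: sm.sm_neg DERIV_minus)
next
  case (sm_exp f)
  then obtain f' where "sm f'" "\<forall>x. (f has_real_derivative f' x) (at x)" by blast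
  then show ?case using sm_exp.hyps
    by (intro exI[of _ "\<lambda>x. exp (f x) * f' x"]) (auto intro: sm.sm_exp sm.sm_mult DERIV_fun_exp)
next
  case (sm_anti g f)
  then show ?case by blast
qed

lemma sm_imp_smooth: assumes "sm f" shows "smooth_fun f"
proof -
  have "sm ((deriv ^^ k) f)" for k
  proof (induction k)
    case 0 then show ?case using assms by simp
  next
    case (Suc k)
    then obtain g where g: "sm g" "\<forall>x. ((deriv ^^ k) f has_real_derivative g x) (at x)"
      using sm_deriv by blast
    then have "deriv ((deriv ^^ k) f) = g" using DERIV_imp_deriv by blast
    then show ?case using g by simp
  qed
  then show ?thesis unfolding smooth_fun_def
    using sm_deriv real_differentiable_def by blast
qed

lemma sm_cont: "sm f \<Longrightarrow> isCont f x"
  using sm_deriv DERIV_isCont by blast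

lemma antideriv:
  assumes "\<And>x. isCont f x"
  obtains F where "\<And>x. (F has_real_derivative f x) (at x)"
proof -
  have "\<exists>F. \<forall>x :: real. (-\<infinity>::ereal) < x \<longrightarrow> x < (\<infinity>::ereal) \<longrightarrow> (F has_vector_derivative f x) (at x)"
    by (rule einterval_antiderivative) (auto intro: assms)
  then show ?thesis using that by (auto simp: has_real_derivative_iff_has_vector_derivative)
qed

lemma ftc01:
  assumes "\<And>x. (F has_real_derivative f x) (at x)"
  shows "integral {0..1} f = F 1 - F 0"
proof -
  have "(f has_integral F 1 - F 0) {0..1}"
    by (rule fundamental_theorem_of_calculus)
       (auto simp: has_real_derivative_iff_has_vector_derivative[symmetric] intro: has_field_derivative_at_within assms)
  then show ?thesis by (rule integral_unique)
qed



lemma shift_scale: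
  fixes w h :: "real \<Rightarrow> real"
  assumes d: "\<And>x. (w has_real_derivative h x) (at x)" and p: "\<And>x. h (x + 1) = lam * h x"
  shows "w (s + 1) - lam * w s = w 1 - lam * w 0"
proof -
  have "\<forall>x. ((\<lambda>s. w (s + 1) - lam * w s) has_real_derivative 0) (at x)"
  proof
    fix x
    have "((\<lambda>s. w (s + 1)) has_real_derivative h (x + 1)) (at x)"
      using d[of "x+1"] DERIV_shift by blast
    moreover have "((\<lambda>z. lam * w z) has_real_derivative lam * h x) (at x)"
      by (rule DERIV_cmult) (rule d)
    ultimately have "((\<lambda>s. w (s + 1) - lam * w s) has_real_derivative h (x + 1) - lam * h x) (at x)"
        by (rule DERIV_diff)
    then show "((\<lambda>s. w (s + 1) - lam * w s) has_real_derivative 0) (at x)" using p by simp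
  qed
  from DERIV_isconst_all[OF this, of s 0] show ?thesis by simp
qed

lemma iter_scale:
  fixes w :: "real \<Rightarrow> real"
  assumes per: "\<And>s. w (s + 1) = lam * w s"
  shows "w (s + real k) = lam ^ k * w s"
proof (induction k)
  case 0 then show ?case by simp
next
  case (Suc k)
  have "w (s + real (Suc k)) = w ((s + real k) + 1)" by (simp add: algebra_simps)
  also have "\<dots> = lam * w (s + real k)" by (rule per)
  finally show ?case using Suc by simp
qed

lemma sign_scale:
  fixes w :: "real \<Rightarrow> real"
  assumes mono: "\<And>x y. x < y \<Longrightarrow> w x < w y" and per: "\<And>s. w (s + 1) = lam * w s"
    and lp: "lam > 0"
  shows "lam > 1 \<Longrightarrow> w s > 0" and "lam < 1 \<Longrightarrow> w s < 0"
proof -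
  have it: "\<And>s k. w (s + real k) = lam ^ k * w s" by (rule iter_scale, rule per)
  have w01: "w 0 < w 1" using mono by simp
  have w1: "w 1 = lam * w 0" using per[of 0] by simp
  obtain k :: nat where k: "real k \<ge> \<bar>s\<bar>" using real_arch_simple by blast
  have mono': "\<And>x y. x \<le> y \<Longrightarrow> w x \<le> w y" using mono by (metis less_eq_real_def)
  show "w s > 0" if "lam > 1"
  proof -
    have "w 0 > 0"
    proof (rule ccontr)
      assume "\<not> w 0 > 0"
      then have "lam * w 0 \<le> 1 * w 0" by (intro mult_right_mono_neg) (use that in auto)
      then show False using w01 w1 by simp
    qed
    moreover have "w 0 \<le> w (s + real k)" using k by (intro mono') auto
    ultimately have "lam ^ k * w s > 0" using it by simp
    then show ?thesis using lp by (simp add: zero_less_mult_iff)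
  qed
  show "w s < 0" if "lam < 1"
  proof -
    have "w 0 < 0"
    proof (rule ccontr)
      assume "\<not> w 0 < 0"
      then have "lam * w 0 \<le> 1 * w 0" by (intro mult_right_mono) (use that in auto)
      then show False using w01 w1 by simp
    qed
    moreover have "w (s - real k) \<le> w 0" using k by (intro mono') auto
    moreover have "w s = lam ^ k * w (s - real k)" using it[of "s - real k" k] by simp
    ultimately show ?thesis using lp by (simp add: mult_pos_neg)
  qed
qed

lemma inj_scale_aux:
  fixes w :: "real \<Rightarrow> real" and j :: int
  assumes mono: "\<And>x y. x < y \<Longrightarrow> w x < w y" and per: "\<And>s. w (s + 1) = exp \<Psi> * w s"
    and "\<Psi> \<noteq> 0" and "s' < s" "s < s' + 1" and eq: "w s = exp (of_int j * \<Psi>) * w s'"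
  shows False
proof -
  have lt: "w s < w (s' + 1)" using mono assms(5) by blast
  have lt2: "w s' < w s" using mono assms(4) by blast
  have p1: "w (s'+1) = exp \<Psi> * w s'" by (rule per)
  show False
  proof (cases "\<Psi> > 0")
    case True
    then have "w s' > 0" using sign_scale(1)[of w "exp \<Psi>", OF mono per] by simp
    then have "exp (of_int j * \<Psi>) > 1"
    proof -
      assume ws: "w s' > 0"
      show ?thesis
      proof (rule ccontr)
        assume "\<not> exp (of_int j * \<Psi>) > 1"
        then have "exp (of_int j * \<Psi>) * w s' \<le> 1 * w s'" using ws by (intro mult_right_mono) auto
        then show False using lt2 eq by simp
      qed
    qed
    then have "of_int j * \<Psi> > 0" by (metis exp_le_one_iff not_le)
    then have "j \<ge> 1" using True by (simp add: zero_less_mult_iff)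
    then have "of_int j * \<Psi> \<ge> 1 * \<Psi>" using True
      by (intro mult_right_mono) auto
    then have "exp (of_int j * \<Psi>) \<ge> exp \<Psi>" by simp
    then have "w s \<ge> exp \<Psi> * w s'" using eq \<open>w s' > 0\<close> by simp
    then show False using lt p1 by simp
  next
    case False
    then have neg: "\<Psi> < 0" using assms(3) by simp
    then have "w s' < 0" using sign_scale(2)[of w "exp \<Psi>", OF mono per] by simp
    then have "exp (of_int j * \<Psi>) < 1"
    proof -
      assume ws: "w s' < 0"
      show ?thesis
      proof (rule ccontr)
        assume "\<not> exp (of_int j * \<Psi>) < 1"
        then have "exp (of_int j * \<Psi>) * w s' \<le> 1 * w s'" using ws by (intro mult_right_mono_neg) auto
        then show False using lt2 eq by simp
      qed
    qed
    then have "of_int j * \<Psi> < 0" by simp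
    then have "j \<ge> 1" using neg by (simp add: mult_less_0_iff)
    then have "of_int j * \<Psi> \<le> 1 * \<Psi>" using neg
      by (intro mult_right_mono_neg) auto
    then have "exp (of_int j * \<Psi>) \<le> exp \<Psi>" by simp
    then have "w s \<ge> exp \<Psi> * w s'" using eq \<open>w s' < 0\<close>
      by (simp add: mult_right_mono_neg)
    then show False using lt p1 by simp
  qed
qed

lemma inj_scale:
  fixes w :: "real \<Rightarrow> real" and j :: int
  assumes mono: "\<And>x y. x < y \<Longrightarrow> w x < w y" and per: "\<And>s. w (s + 1) = exp \<Psi> * w s"
    and "\<Psi> \<noteq> 0" "0 \<le> s" "s < 1" "0 \<le> s'" "s' < 1" "s \<noteq> s'"
    and eq: "w s = exp (of_int j * \<Psi>) * w s'"
  shows False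
proof (cases "s' < s")
  case True
  then show ?thesis using inj_scale_aux[of w \<Psi>, OF mono per assms(3) True _ eq] assms by simp
next
  case False
  then have "s < s'" using assms by simp
  have "w s' = exp (- (of_int j * \<Psi>)) * w s" unfolding eq
    by (simp add: mult.assoc[symmetric] exp_add[symmetric])
  then have "w s' = exp (of_int (-j) * \<Psi>) * w s" by simp
  then show ?thesis using inj_scale_aux[of w \<Psi> s s' "-j", OF mono per assms(3) \<open>s < s'\<close>] assms by simp
qed

lemma inj_shift:
  fixes w :: "real \<Rightarrow> real" and j :: int
  assumes mono: "\<And>x y. x < y \<Longrightarrow> w x < w y" and per: "\<And>s. w (s + 1) = w s + L"
    and "0 \<le> s" "s < 1" "0 \<le> s'" "s' < 1" "s \<noteq> s'"
    and eq: "w s = w s' + of_int j * L"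
  shows False
proof -
  have L0: "L > 0" using per[of 0] mono[of 0 1] by simp
  show False
proof (cases "s' < s")
  case True
  have "w s' < w s" using mono True by blast
  then have a1: "of_int j * L > 0" using eq by simp
  have "s < s' + 1" using assms by simp
  then have "w s < w (s' + 1)" using mono by blast
  then have "of_int j * L < L" using eq per[of s'] by simp
  from a1 L0 have "j > 0" by (simp add: zero_less_mult_iff)
  then have "of_int j * L \<ge> 1 * L" using L0 by (intro mult_right_mono) auto
  with \<open>of_int j * L < L\<close> show False by simp
next
  case False
  then have "s < s'" using assms by simp
  have "w s < w s'" using mono \<open>s < s'\<close> by blast
  then have a1: "of_int j * L < 0" using eq by simp
  have "s' < s + 1" using assms by simp
  then have "w s' < w (s + 1)" using mono by blast
  then have "- of_int j * L < L" using eq per[of s] by simp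
  from a1 L0 have "j < 0" by (simp add: mult_less_0_iff)
  then have "of_int (-j) * L \<ge> 1 * L" using L0 by (intro mult_right_mono) auto
  with \<open>- of_int j * L < L\<close> show False by simp
qed
qed



lemma sum_delta2:
  fixes i j n :: nat
  assumes "i \<in> {2..n}" "j \<in> {2..n}"
  shows "(\<Sum>k\<in>{2..n}. (lhat k)\<^sup>2 * (if k = i then 1 else 0) * (if k = j then 1 else 0)) =
         (if i = j then (lhat i)\<^sup>2 else (0::real))"
proof -
  have "(\<Sum>k\<in>{2..n}. (lhat k)\<^sup>2 * (if k = i then 1 else 0) * (if k = j then 1 else 0)) =
        (\<Sum>k\<in>{2..n}. if k = i then (if i = j then (lhat i)\<^sup>2 else 0) else (0::real))"
    by (rule sum.cong) auto
  also have "\<dots> = (if i = j then (lhat i)\<^sup>2 else 0)" using assms by simp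
  finally show ?thesis .
qed

lemma DERIV_eqD: "(f has_real_derivative X) F \<Longrightarrow> X = Y \<Longrightarrow> (f has_real_derivative Y) F"
  by simp

lemma core_vd:
  fixes a c :: real and \<phi> u v :: "real \<Rightarrow> real"
  assumes du: "\<And>x. (u has_real_derivative a*c*exp(\<phi> x)) (at x)"
    and dv: "\<And>x. (v has_real_derivative -(a/c)*exp(-\<phi> x)) (at x)"
  shows "vector_derivative (\<lambda>s. ((u s + v s)/2, (u s - v s)/2)) (at s) =
     ((a*c*exp(\<phi> s) - (a/c)*exp(-\<phi> s))/2, (a*c*exp(\<phi> s) + (a/c)*exp(-\<phi> s))/2)"
proof -
  have 1: "((\<lambda>s. (u s + v s)/2) has_real_derivative (a*c*exp(\<phi> s) - (a/c)*exp(-\<phi> s))/2) (at s)"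
    by (rule DERIV_eqD[OF DERIV_cdivide[OF DERIV_add[OF du dv], of 2]]) simp
  have 2: "((\<lambda>s. (u s - v s)/2) has_real_derivative (a*c*exp(\<phi> s) + (a/c)*exp(-\<phi> s))/2) (at s)"
    by (rule DERIV_eqD[OF DERIV_cdivide[OF DERIV_diff[OF du dv], of 2]]) simp
  show ?thesis
    by (rule vector_derivative_at, rule has_vector_derivative_Pair)
       (use 1 2 in \<open>auto simp: has_real_derivative_iff_has_vector_derivative\<close>)
qed

lemma core_vd2:
  fixes a c :: real and \<phi> \<tau> :: "real \<Rightarrow> real"
  assumes d\<phi>: "\<And>x. (\<phi> has_real_derivative a * \<tau> x) (at x)"
  shows "vector_derivative (\<lambda>s. ((a*c*exp(\<phi> s) - (a/c)*exp(-\<phi> s))/2, (a*c*exp(\<phi> s) + (a/c)*exp(-\<phi> s))/2)) (at s) =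
     ((a*c*exp(\<phi> s) + (a/c)*exp(-\<phi> s)) * (a * \<tau> s) /2, (a*c*exp(\<phi> s) - (a/c)*exp(-\<phi> s)) * (a * \<tau> s)/2)"
proof -
  have e1: "((\<lambda>s. exp (\<phi> s)) has_real_derivative exp (\<phi> s) * (a * \<tau> s)) (at s)"
    by (rule DERIV_fun_exp[OF d\<phi>])
  have e2: "((\<lambda>s. exp (- \<phi> s)) has_real_derivative exp (- \<phi> s) * (- (a * \<tau> s))) (at s)"
    by (rule DERIV_fun_exp[OF DERIV_minus[OF d\<phi>]])
  have 1: "((\<lambda>s. (a*c*exp(\<phi> s) - (a/c)*exp(-\<phi> s))/2) has_real_derivative
      (a*c*exp(\<phi> s) + (a/c)*exp(-\<phi> s)) * (a * \<tau> s) /2) (at s)"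
    by (rule DERIV_eqD[OF DERIV_cdivide[OF DERIV_diff[OF DERIV_cmult[OF e1, of "a*c"] DERIV_cmult[OF e2, of "a/c"]], of 2]])
       (simp add: algebra_simps)
  have 2: "((\<lambda>s. (a*c*exp(\<phi> s) + (a/c)*exp(-\<phi> s))/2) has_real_derivative
      (a*c*exp(\<phi> s) - (a/c)*exp(-\<phi> s)) * (a * \<tau> s) /2) (at s)"
    by (rule DERIV_eqD[OF DERIV_cdivide[OF DERIV_add[OF DERIV_cmult[OF e1, of "a*c"] DERIV_cmult[OF e2, of "a/c"]], of 2]])
       (simp add: algebra_simps)
  show ?thesis
    by (rule vector_derivative_at, rule has_vector_derivative_Pair)
       (use 1 2 in \<open>auto simp: has_real_derivative_iff_has_vector_derivative\<close>)
qed

lemma alg1: "- ((A - B)/2) * ((A - B)/2) + ((A + B)/2) * ((A + B)/2) = A * (B::real)"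
  by (simp add: field_simps; algebra?)

lemma alg2: "(a::real) \<noteq> 0 \<Longrightarrow> A * B = a\<^sup>2 \<Longrightarrow>
   - ((A + B)/(2*a)) * ((A + B)/(2*a)) + ((A - B)/(2*a)) * ((A - B)/(2*a)) = -1"
proof -
  assume a: "a \<noteq> 0" "A * B = a\<^sup>2"
  have "- ((A + B)/(2*a)) * ((A + B)/(2*a)) + ((A - B)/(2*a)) * ((A - B)/(2*a)) = - (A*B) / a\<^sup>2"
    using a(1) by (simp add: field_simps power2_eq_square; algebra?)
  then show ?thesis using a by simp
qed

lemma alg3: "- ((A + B)/(2*a)) * ((A - B)/2) + ((A - B)/(2*a)) * ((A + B)/(2::real)) = 0"
  by (simp add: field_simps)

lemma alg4: "(a::real) \<noteq> 0 \<Longrightarrow> A * B = a\<^sup>2 \<Longrightarrow>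
   - (- ((A + B)/(2*a)) * ((A + B) * (a * t) / 2) + ((A - B)/(2*a)) * ((A - B) * (a * t) / 2)) = t * a\<^sup>2"
proof -
  assume a: "a \<noteq> 0" "A * B = a\<^sup>2"
  have "- (- ((A + B)/(2*a)) * ((A + B) * (a * t) / 2) + ((A - B)/(2*a)) * ((A - B) * (a * t) / 2)) = t * (A * B)"
    using a(1) by (simp add: field_simps power2_eq_square; algebra?)
  then show ?thesis using a by simp
qed

lemma core_spe:
  fixes a c :: real and \<phi> u v \<tau> :: "real \<Rightarrow> real" and lhat :: "nat \<Rightarrow> real"
  assumes a0: "a > 0" and c0: "c > 0" and l1: "lhat 1 = a"
    and d\<phi>: "\<And>x. (\<phi> has_real_derivative a * \<tau> x) (at x)"
    and du: "\<And>x. (u has_real_derivative a*c*exp(\<phi> x)) (at x)"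
    and dv: "\<And>x. (v has_real_derivative -(a/c)*exp(-\<phi> x)) (at x)"
  shows "spe_induces n lhat (\<lambda>s. ((u s + v s)/2, (u s - v s)/2)) (flat_torus_metric lhat) (ds1_sq_tensor \<tau> (a\<^sup>2))"
proof -
  define \<Gamma> where "\<Gamma> = (\<lambda>s. ((u s + v s)/2, (u s - v s)/2))"
  define A where "A = (\<lambda>s. a*c*exp(\<phi> s))"
  define B where "B = (\<lambda>s. (a/c)*exp(-\<phi> s))"
  have AB: "A x * B x = a\<^sup>2" for x
  proof -
    have "A x * B x = a * a * (c / c) * (exp (\<phi> x) * exp (- \<phi> x))" unfolding A_def B_def by simp
    also have "\<dots> = a\<^sup>2" using c0 by (simp add: power2_eq_square exp_minus)
    finally show ?thesis .
  qed
  have Apos: "A x > 0" "B x > 0" for x unfolding A_def B_def using a0 c0 by auto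
  have VD: "\<And>s. vector_derivative \<Gamma> (at s) = ((A s - B s)/2, (A s + B s)/2)"
    unfolding \<Gamma>_def A_def B_def by (rule core_vd[OF du dv])
  have VD2: "\<And>s. vector_derivative (\<lambda>t. vector_derivative \<Gamma> (at t)) (at s) =
     ((A s + B s) * (a * \<tau> s) /2, (A s - B s) * (a * \<tau> s)/2)"
    unfolding VD unfolding A_def B_def by (rule core_vd2[OF d\<phi>])
  have an: "a \<noteq> 0" using a0 by simp
  show ?thesis
    unfolding \<Gamma>_def[symmetric] spe_induces_def
  proof (intro allI conjI ballI)
    fix s :: "nat \<Rightarrow> real" and i j
    assume i: "i \<in> {1..n}" and j: "j \<in> {1..n}"
    show "spe_induced_metric n lhat \<Gamma> s i j = flat_torus_metric lhat s i j"
    proof (cases "i = 1")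
      case True
      then show ?thesis
      proof (cases "j = 1")
        case True
        have "mink (vector_derivative \<Gamma> (at (s 1))) (vector_derivative \<Gamma> (at (s 1))) = a\<^sup>2"
          unfolding VD mink_def fst_conv snd_conv alg1 AB ..
        then show ?thesis using \<open>i = 1\<close> True l1
          by (simp add: spe_induced_metric_def prod_metric_def spe_tangent_def flat_torus_metric_def)
      next
        case False
        then show ?thesis using \<open>i = 1\<close>
          by (simp add: spe_induced_metric_def prod_metric_def spe_tangent_def flat_torus_metric_def mink_def)
      qed
    next
      case False
      then have i2: "i \<in> {2..n}" using i by auto
      show ?thesis
      proof (cases "j = 1")
        case True
        then show ?thesis using False
          by (simp add: spe_induced_metric_def prod_metric_def spe_tangent_def flat_torus_metric_def mink_def)
      next
        case jn: False
        then have j2: "j \<in> {2..n}" using j by auto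
        show ?thesis using False jn sum_delta2[OF i2 j2, of lhat]
          by (simp add: spe_induced_metric_def prod_metric_def spe_tangent_def flat_torus_metric_def mink_def)
      qed
    qed
  next
    fix s :: "nat \<Rightarrow> real"
    define \<nu> where "\<nu> = (((A (s 1) + B (s 1))/(2*a), (A (s 1) - B (s 1))/(2*a)), (\<lambda>_::nat. 0::real))"
    have "spe_future_unit_normal n lhat \<Gamma> s \<nu>"
      unfolding spe_future_unit_normal_def
    proof (intro conjI ballI)
      show "prod_metric n lhat \<nu> \<nu> = -1"
        unfolding \<nu>_def prod_metric_def mink_def fst_conv snd_conv using alg2[OF an AB] by simp
      show "fst (fst \<nu>) > 0" unfolding \<nu>_def fst_conv by (intro divide_pos_pos add_pos_pos) (use Apos a0 in auto)
      fix i assume "i \<in> {1..n}"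
      show "prod_metric n lhat \<nu> (spe_tangent \<Gamma> s i) = 0"
      proof (cases "i = 1")
        case True
        then show ?thesis unfolding \<nu>_def prod_metric_def mink_def spe_tangent_def VD
          using alg3 by simp
      qed (simp add: \<nu>_def prod_metric_def mink_def spe_tangent_def)
    qed
    moreover have "\<forall>i\<in>{1..n}. \<forall>j\<in>{1..n}. - prod_metric n lhat \<nu> (spe_hessian \<Gamma> s i j) = ds1_sq_tensor \<tau> (a\<^sup>2) s i j"
    proof (intro ballI)
      fix i j assume "i \<in> {1..n}" "j \<in> {1..n}"
      show "- prod_metric n lhat \<nu> (spe_hessian \<Gamma> s i j) = ds1_sq_tensor \<tau> (a\<^sup>2) s i j"
      proof (cases "i = 1 \<and> j = 1")
        case True
        have "- mink (fst \<nu>) (vector_derivative (\<lambda>t. vector_derivative \<Gamma> (at t)) (at (s 1))) = \<tau> (s 1) * a\<^sup>2"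
          unfolding VD2 \<nu>_def mink_def fst_conv snd_conv by (rule alg4[OF an AB])
        then show ?thesis using True
          by (simp add: spe_hessian_def prod_metric_def ds1_sq_tensor_def \<nu>_def)
      next
        case False
        then show ?thesis
          by (auto simp add: spe_hessian_def prod_metric_def ds1_sq_tensor_def mink_def)
      qed
    qed
    ultimately show "\<exists>\<nu>. spe_future_unit_normal n lhat \<Gamma> s \<nu> \<and>
      (\<forall>i\<in>{1..n}. \<forall>j\<in>{1..n}. - prod_metric n lhat \<nu> (spe_hessian \<Gamma> s i j) = ds1_sq_tensor \<tau> (a\<^sup>2) s i j)"
      by blast
  qed
qed



lemma deriv_strict_mono:
  assumes "\<And>x. (f has_real_derivative f' x) (at x)" "\<And>x. f' x > 0" "x < y"
  shows "f x < (f y :: real)"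
  using DERIV_pos_imp_increasing[of x y f] assms by blast

lemma sm_divc: "sm f \<Longrightarrow> sm (\<lambda>x. f x / c)"
proof -
  assume "sm f"
  then have "sm (\<lambda>x. f x * (1/c))" by (intro sm_mult sm_const)
  then show ?thesis by simp
qed

lemma boost_null: "fst (boost \<theta> p) + snd (boost \<theta> p) = exp \<theta> * (fst p + snd p)"
  by (simp add: boost_def cosh_plus_sinh[symmetric] algebra_simps)

lemma boost_pair: "boost \<Psi> ((u + v)/2, (u - v)/2) =
   ((exp \<Psi> * u + exp (-\<Psi>) * v)/2, (exp \<Psi> * u - exp (-\<Psi>) * v)/2)"
  by (simp add: boost_def cosh_def sinh_def field_simps)



lemma sm_diff: "sm f \<Longrightarrow> sm g \<Longrightarrow> sm (\<lambda>x. f x - g x)"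
proof -
  assume "sm f" "sm g"
  then have "sm (\<lambda>x. f x + - g x)" by (intro sm_add sm_neg)
  then show ?thesis by simp
qed

theorem proposition6p2:
  fixes n :: nat and l :: "nat \<Rightarrow> real" and \<mu> r :: real and \<tau> N :: "real \<Rightarrow> real"
  assumes n3: "n \<ge> 3"
    and l_pos: "\<forall>k\<in>{1..n}. l k > 0"
    and \<tau>_smooth: "smooth_fun \<tau>" and \<tau>_per: "periodic1 \<tau>"
    and N_smooth: "smooth_fun N" and N_per: "periodic1 N" and N_pos: "\<forall>s. N s > 0"
    and r_choice:
      "let \<tau>star = integral {0..1} (\<lambda>s. N s * \<tau> s) / integral {0..1} N in
         (\<mu> \<noteq> 0 \<and> \<tau>star \<noteq> 0 \<and> sgn \<mu> = sgn \<tau>star \<and> r = (\<mu> / \<tau>star) powr (1 / real n))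
         \<or> (\<mu> = 0 \<and> \<tau>star = 0 \<and> r > 0)"
  shows
    "let gbar = flat_torus_metric (\<lambda>k. r * l k);
         Kbar = ds1_sq_tensor \<tau> ((r * l 1)\<^sup>2);
         \<tau>circ = integral {0..1} \<tau>;
         lhat = (\<lambda>k. r * l k)
     in (\<tau>circ \<noteq> 0 \<longrightarrow>
           (\<exists>\<Gamma>. kasner_embedded_curve ((r * l 1) * \<tau>circ) \<Gamma> \<and> spe_induces n lhat \<Gamma> gbar Kbar))
      \<and> (\<tau>circ = 0 \<longrightarrow>
           (\<exists>L > 0. \<exists>\<Gamma>. static_embedded_curve L \<Gamma> \<and> spe_induces n lhat \<Gamma> gbar Kbar))"
proof -
  have r0: "r > 0"
  proof -
    define ts where "ts = integral {0..1} (\<lambda>s. N s * \<tau> s) / integral {0..1} N"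
    have "(\<mu> \<noteq> 0 \<and> ts \<noteq> 0 \<and> sgn \<mu> = sgn ts \<and> r = (\<mu> / ts) powr (1 / real n)) \<or> (\<mu> = 0 \<and> ts = 0 \<and> r > 0)"
      using r_choice unfolding ts_def Let_def by simp
    then show ?thesis
    proof
      assume h: "\<mu> \<noteq> 0 \<and> ts \<noteq> 0 \<and> sgn \<mu> = sgn ts \<and> r = (\<mu> / ts) powr (1 / real n)"
      then have "\<mu> / ts > 0"
        by (cases "\<mu> > 0"; cases "ts > 0") (auto simp: sgn_if divide_pos_pos divide_neg_neg split: if_splits)
      then show ?thesis using h by simp
    qed simp
  qed
  have l10: "l 1 > 0" using l_pos n3 by auto
  define a where "a = r * l 1"
  have a0: "a > 0" unfolding a_def using r0 l10 by simp
  define tc where "tc = integral {0..1} \<tau>"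
  have sm\<tau>: "sm \<tau>" by (rule sm_smooth[OF \<tau>_smooth])
  obtain F where dF: "\<And>x. (F has_real_derivative \<tau> x) (at x)"
    using antideriv[of \<tau>] sm_cont[OF sm\<tau>] by blast
  have tcF: "tc = F 1 - F 0" unfolding tc_def by (rule ftc01[OF dF])
  define \<phi> where "\<phi> = (\<lambda>x. a * F x)"
  have d\<phi>: "\<And>x. (\<phi> has_real_derivative a * \<tau> x) (at x)"
    unfolding \<phi>_def by (rule DERIV_cmult[OF dF])
  have sm\<phi>: "sm \<phi>" by (rule sm_anti[OF _ allI[OF d\<phi>]]) (intro sm_mult sm_const sm\<tau>)
  have \<phi>per: "\<phi> (s + 1) = \<phi> s + a * tc" for s
  proof -
    have "\<phi> (s + 1) - 1 * \<phi> s = \<phi> 1 - 1 * \<phi> 0"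
      by (rule shift_scale[OF d\<phi>]) (use \<tau>_per in \<open>simp add: periodic1_def\<close>)
    then show ?thesis unfolding tcF \<phi>_def by (simp add: algebra_simps)
  qed
  obtain P where dP: "\<And>x. (P has_real_derivative exp (\<phi> x)) (at x)"
    using antideriv[of "\<lambda>x. exp (\<phi> x)"] sm_cont[OF sm_exp[OF sm\<phi>]] by blast
  obtain Q where dQ: "\<And>x. (Q has_real_derivative exp (- \<phi> x)) (at x)"
    using antideriv[of "\<lambda>x. exp (- \<phi> x)"] sm_cont[OF sm_exp[OF sm_neg[OF sm\<phi>]]] by blast
  have smP: "sm P" by (rule sm_anti[OF sm_exp[OF sm\<phi>] allI[OF dP]])
  have smQ: "sm Q" by (rule sm_anti[OF sm_exp[OF sm_neg[OF sm\<phi>]] allI[OF dQ]])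
  have Kas: "\<exists>\<Gamma>. kasner_embedded_curve (a * tc) \<Gamma> \<and>
      spe_induces n (\<lambda>k. r * l k) \<Gamma> (flat_torus_metric (\<lambda>k. r * l k)) (ds1_sq_tensor \<tau> (a\<^sup>2))"
    if tc0: "tc \<noteq> 0"
  proof -
    define \<Psi> where "\<Psi> = a * tc"
    have \<Psi>0: "\<Psi> \<noteq> 0" unfolding \<Psi>_def using a0 tc0 by simp
    have eP1: "exp \<Psi> \<noteq> 1" "exp (-\<Psi>) \<noteq> 1" using \<Psi>0 by auto
    define K1 where "K1 = a * P 1 - exp \<Psi> * (a * P 0)"
    define K2 where "K2 = - a * Q 1 - exp (-\<Psi>) * (- a * Q 0)"
    define u where "u = (\<lambda>s. a * P s + K1 / (exp \<Psi> - 1))"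
    define v where "v = (\<lambda>s. - a * Q s + K2 / (exp (-\<Psi>) - 1))"
    have du: "\<And>x. (u has_real_derivative a * 1 * exp (\<phi> x)) (at x)"
      unfolding u_def by (rule DERIV_eqD[OF DERIV_add[OF DERIV_cmult[OF dP] DERIV_const]]) simp
    have dv: "\<And>x. (v has_real_derivative - (a / 1) * exp (- \<phi> x)) (at x)"
      unfolding v_def by (rule DERIV_eqD[OF DERIV_add[OF DERIV_cmult[OF dQ] DERIV_const]]) simp
    have dua: "\<And>x. ((\<lambda>s. a * P s) has_real_derivative a * exp (\<phi> x)) (at x)"
      by (rule DERIV_cmult[OF dP])
    have dva: "\<And>x. ((\<lambda>s. - a * Q s) has_real_derivative - a * exp (- \<phi> x)) (at x)"
      by (rule DERIV_cmult[OF dQ])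
    have uper: "u (s + 1) = exp \<Psi> * u s" for s
    proof -
      have "a * P (s + 1) - exp \<Psi> * (a * P s) = a * P 1 - exp \<Psi> * (a * P 0)"
        by (rule shift_scale[OF dua]) (simp add: \<phi>per \<Psi>_def exp_add)
      moreover have "u (s+1) - exp \<Psi> * u s = (a * P (s + 1) - exp \<Psi> * (a * P s)) + (1 - exp \<Psi>) * (K1 / (exp \<Psi> - 1))"
      proof -
        define D where "D = K1 / (exp \<Psi> - 1)"
        show ?thesis unfolding u_def D_def[symmetric] by (simp add: algebra_simps)
      qed
      moreover have "(1 - exp \<Psi>) * (K1 / (exp \<Psi> - 1)) = - K1"
        using eP1 by (simp add: field_simps)
      ultimately show ?thesis unfolding K1_def by simp
    qed
    have vper: "v (s + 1) = exp (-\<Psi>) * v s" for s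
    proof -
      have "- a * Q (s + 1) - exp (-\<Psi>) * (- a * Q s) = - a * Q 1 - exp (-\<Psi>) * (- a * Q 0)"
        by (rule shift_scale[OF dva]) (simp add: \<phi>per \<Psi>_def exp_add[symmetric] algebra_simps)
      then show ?thesis using eP1 unfolding v_def K2_def by (simp add: field_simps)
    qed
    have umono: "\<And>x y. x < y \<Longrightarrow> u x < u y"
      by (rule deriv_strict_mono[OF du]) (use a0 in simp)
    have vmono: "\<And>x y. x < y \<Longrightarrow> (\<lambda>s. - v s) x < (\<lambda>s. - v s) y"
      by (rule deriv_strict_mono[OF DERIV_minus[OF dv]]) (use a0 in simp)
    have vper': "\<And>s. (\<lambda>s. - v s) (s + 1) = exp (-\<Psi>) * (\<lambda>s. - v s) s" using vper by simp
    define \<Gamma> where "\<Gamma> = (\<lambda>s. ((u s + v s)/2, (u s - v s)/2))"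
    have spe: "spe_induces n (\<lambda>k. r * l k) \<Gamma> (flat_torus_metric (\<lambda>k. r * l k)) (ds1_sq_tensor \<tau> (a\<^sup>2))"
      unfolding \<Gamma>_def by (rule core_spe[OF a0 _ _ d\<phi> du dv]) (auto simp: a_def)
    have smu: "sm u" unfolding u_def by (intro sm_add sm_mult sm_const smP)
    have smv: "sm v" unfolding v_def by (intro sm_add sm_mult sm_const smQ)
    have kas: "kasner_embedded_curve \<Psi> \<Gamma>"
      unfolding kasner_embedded_curve_def
    proof (intro conjI allI impI)
      show "smooth_curve \<Gamma>" unfolding smooth_curve_def \<Gamma>_def fst_conv snd_conv
        by (intro conjI sm_imp_smooth sm_divc sm_add sm_diff smu smv)
      fix s
      show "\<Gamma> s \<in> (if \<Psi> > 0 then I_plus else I_minus)"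
      proof (cases "\<Psi> > 0")
        case True
        have "u s > 0" by (rule sign_scale(1)[of u "exp \<Psi>", OF umono uper]) (use True in auto)
        moreover have "- v s < 0"
          using sign_scale(2)[of "\<lambda>s. - v s" "exp (-\<Psi>)" s, OF vmono vper'] True by auto
        ultimately show ?thesis using True unfolding \<Gamma>_def I_plus_def by auto
      next
        case False
        then have neg: "\<Psi> < 0" using \<Psi>0 by simp
        have "u s < 0" by (rule sign_scale(2)[of u "exp \<Psi>", OF umono uper]) (use neg in auto)
        moreover have "- v s > 0"
          using sign_scale(1)[of "\<lambda>s. - v s" "exp (-\<Psi>)" s, OF vmono vper'] neg by auto
        ultimately have "- ((u s + v s)/2) > \<bar>(u s - v s)/2\<bar>" by (simp add: abs_less_iff field_simps)
        then show ?thesis using False unfolding \<Gamma>_def I_minus_def by simp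
      qed
      show "\<exists>j::int. \<Gamma> (s + 1) = boost (of_int j * \<Psi>) (\<Gamma> s)"
        by (rule exI[of _ 1]) (simp add: \<Gamma>_def boost_pair uper vper)
      show "vector_derivative \<Gamma> (at s) \<noteq> 0"
        unfolding \<Gamma>_def core_vd[OF du dv] using a0 by (auto simp: zero_prod_def add_pos_pos)
    next
      fix s s' :: real
      assume h: "0 \<le> s \<and> s < 1 \<and> 0 \<le> s' \<and> s' < 1 \<and> s \<noteq> s'"
      show "\<not> (\<exists>j::int. \<Gamma> s = boost (of_int j * \<Psi>) (\<Gamma> s'))"
      proof
        assume "\<exists>j::int. \<Gamma> s = boost (of_int j * \<Psi>) (\<Gamma> s')"
        then obtain j :: int where j: "\<Gamma> s = boost (of_int j * \<Psi>) (\<Gamma> s')" by blast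
        have "fst (\<Gamma> s) + snd (\<Gamma> s) = exp (of_int j * \<Psi>) * (fst (\<Gamma> s') + snd (\<Gamma> s'))"
          unfolding j by (rule boost_null)
        moreover have hh: "\<And>x y::real. (x + y)/2 + (x - y)/2 = x" by (simp add: field_simps)
        ultimately have "u s = exp (of_int j * \<Psi>) * u s'" unfolding \<Gamma>_def fst_conv snd_conv by (simp only: hh)
        then show False using inj_scale[of u \<Psi> s s' j, OF umono uper \<Psi>0] h by blast
      qed
    qed
    show ?thesis using kas spe unfolding \<Psi>_def by blast
  qed
  have Sta: "\<exists>L > 0. \<exists>\<Gamma>. static_embedded_curve L \<Gamma> \<and>
      spe_induces n (\<lambda>k. r * l k) \<Gamma> (flat_torus_metric (\<lambda>k. r * l k)) (ds1_sq_tensor \<tau> (a\<^sup>2))"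
    if tc0: "tc = 0"
  proof -
    have \<phi>p: "\<phi> (s + 1) = \<phi> s" for s using \<phi>per tc0 by simp
    define I1 where "I1 = P 1 - P 0"
    define I2 where "I2 = Q 1 - Q 0"
    have I1p: "I1 > 0" unfolding I1_def using deriv_strict_mono[OF dP, of 0 1] by simp
    have I2p: "I2 > 0" unfolding I2_def using deriv_strict_mono[OF dQ, of 0 1] by simp
    define c where "c = sqrt (I2 / I1)"
    have c0: "c > 0" unfolding c_def using I1p I2p by simp
    have cc: "c * c = I2 / I1" unfolding c_def using I1p I2p by simp
    have Pp: "P (s + 1) = P s + I1" for s
      using shift_scale[OF dP, of 1 s] \<phi>p unfolding I1_def by simp
    have Qp: "Q (s + 1) = Q s + I2" for s
      using shift_scale[OF dQ, of 1 s] \<phi>p unfolding I2_def by simp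
    define L where "L = a * c * I1"
    have L0: "L > 0" unfolding L_def using a0 c0 I1p by simp
    have L2: "a / c * I2 = L"
    proof -
      have "I2 = c * c * I1" using cc I1p by simp
      then show ?thesis unfolding L_def using c0 by (simp add: field_simps)
    qed
    define u where "u = (\<lambda>s. a * c * P s)"
    define v where "v = (\<lambda>s. - (a / c) * Q s)"
    have du: "\<And>x. (u has_real_derivative a * c * exp (\<phi> x)) (at x)"
      unfolding u_def by (rule DERIV_cmult[OF dP])
    have dv: "\<And>x. (v has_real_derivative - (a / c) * exp (- \<phi> x)) (at x)"
      unfolding v_def by (rule DERIV_cmult[OF dQ])
    have uper: "u (s + 1) = u s + L" for s unfolding u_def L_def Pp by (simp add: algebra_simps)
    have vper: "v (s + 1) = v s - L" for s unfolding v_def L2[symmetric] Qp by (simp add: algebra_simps)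
    define \<Gamma> where "\<Gamma> = (\<lambda>s. ((u s + v s)/2, (u s - v s)/2))"
    have spe: "spe_induces n (\<lambda>k. r * l k) \<Gamma> (flat_torus_metric (\<lambda>k. r * l k)) (ds1_sq_tensor \<tau> (a\<^sup>2))"
      unfolding \<Gamma>_def by (rule core_spe[OF a0 c0 _ d\<phi> du dv]) (auto simp: a_def)
    have smu: "sm u" unfolding u_def by (intro sm_add sm_mult sm_const smP)
    have smv: "sm v" unfolding v_def by (intro sm_add sm_mult sm_const smQ)
    have dx: "\<And>x. ((\<lambda>s. (u s - v s)/2) has_real_derivative (a*c*exp(\<phi> x) + (a/c)*exp(-\<phi> x))/2) (at x)"
      by (rule DERIV_eqD[OF DERIV_cdivide[OF DERIV_diff[OF du dv]]]) simp
    have xmono: "\<And>x y. x < y \<Longrightarrow> (\<lambda>s. (u s - v s)/2) x < (\<lambda>s. (u s - v s)/2) y"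
      by (rule deriv_strict_mono[OF dx]) (use a0 c0 in \<open>auto intro!: divide_pos_pos add_pos_pos\<close>)
    have xper: "\<And>s. (\<lambda>s. (u s - v s)/2) (s + 1) = (\<lambda>s. (u s - v s)/2) s + L"
      by (simp add: uper vper field_simps)
    have sta: "static_embedded_curve L \<Gamma>"
      unfolding static_embedded_curve_def
    proof (intro conjI allI impI)
      show "smooth_curve \<Gamma>" unfolding smooth_curve_def \<Gamma>_def fst_conv snd_conv
        by (intro conjI sm_imp_smooth sm_divc sm_add sm_diff smu smv)
      fix s
      show "\<exists>j::int. \<Gamma> (s + 1) = \<Gamma> s + (0, of_int j * L)"
        by (rule exI[of _ 1]) (simp only: \<Gamma>_def uper vper, simp add: field_simps)
      show "vector_derivative \<Gamma> (at s) \<noteq> 0"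
        unfolding \<Gamma>_def core_vd[OF du dv] using a0 c0 by (auto simp: zero_prod_def add_pos_pos)
    next
      fix s s' :: real
      assume h: "0 \<le> s \<and> s < 1 \<and> 0 \<le> s' \<and> s' < 1 \<and> s \<noteq> s'"
      show "\<not> (\<exists>j::int. \<Gamma> s = \<Gamma> s' + (0, of_int j * L))"
      proof
        assume "\<exists>j::int. \<Gamma> s = \<Gamma> s' + (0, of_int j * L)"
        then obtain j :: int where j: "\<Gamma> s = \<Gamma> s' + (0, of_int j * L)" by blast
        have "snd (\<Gamma> s) = snd (\<Gamma> s') + of_int j * L" unfolding j by simp
        then have "(\<lambda>s. (u s - v s)/2) s = (\<lambda>s. (u s - v s)/2) s' + of_int j * L"
          unfolding \<Gamma>_def by simp
        then show False using inj_shift[of "\<lambda>s. (u s - v s)/2" L s s' j, OF xmono xper] h by blast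
      qed
    qed
    show ?thesis using sta spe L0 by blast
  qed
  show ?thesis
    unfolding Let_def a_def[symmetric] tc_def[symmetric]
    using Kas Sta by blast
qed

end
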